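(* If $z\in\mathcal F_\mathbb Z$ is FPF-Grassmannian and $E\subset\mathbb Z$ is a finite set with $z(E)=E$, then $[[z]]_E$ is FPF-Grassmannian.
   Context: Let $S_\mathbb Z$ be the group of finitely supported permutations of $\mathbb Z$. Let $\Theta(i)=i-(-1)^i$ and $\mathcal F_\mathbb Z=\{w^{-1}\Theta w:w\in S_\mathbb Z\}$. $\mathcal I(z)$ is the involution whose nontrivial cycles are exactly the cycles $(p,q)$ of $z$ with $p<q$ for which some cycle $(a,b)$ of $z$ with $a<b$ satisfies $p<b<q$. An involution is I-Grassmannian if it is $1$ or $(\phi_1,n+1)\cdots(\phi_r,n+r)$ with $r\ge1$ and integers $\phi_1<\cdots<\phi_r\le n$. The element $z$ is FPF-Grassmannian if $\mathcal I(z)$ is I-Grassmannian. For a finite $E$ of size $m$ with $z(E)=E$, let $\phi_E:[m]\to E$ and $\psi_E:E\to[m]$ be the order-preserving bijections. Set $[z]_E=\psi_E\circ z\circ\phi_E$. Let $[[z]]_E\in\mathcal F_\mathbb Z$ agree with $[z]_E$ on $[m]$ and with $\Theta$ outside $[m]$. *)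

theory Defs
  imports Main
begin

definition SZ :: "(int \<Rightarrow> int) set" where
  "SZ = {w. bij w \<and> finite {i. w i \<noteq> i}}"

definition Theta :: "int \<Rightarrow> int" where
  "Theta i = i - (if even i then 1 else -1)"

definition FZ :: "(int \<Rightarrow> int) set" where
  "FZ = {inv w \<circ> Theta \<circ> w | w. w \<in> SZ}"

definition Icyc :: "(int \<Rightarrow> int) \<Rightarrow> int \<Rightarrow> int \<Rightarrow> bool" where
  "Icyc z p q \<longleftrightarrow> z p = q \<and> z q = p \<and> p < q \<and>
     (\<exists>a b. z a = b \<and> z b = a \<and> a < b \<and> p < b \<and> b < q)"

definition Iinv :: "(int \<Rightarrow> int) \<Rightarrow> int \<Rightarrow> int" where
  "Iinv z i = (if Icyc z i (z i) \<or> Icyc z (z i) i then z i else i)"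

text \<open>I-Grassmannian: 1, or (phi_1,n+1)...(phi_r,n+r) with r>=1, phi_1<...<phi_r<=n,
  written out as a function (the transpositions are disjoint).\<close>
definition I_grassmannian :: "(int \<Rightarrow> int) \<Rightarrow> bool" where
  "I_grassmannian y \<longleftrightarrow> y = id \<or>
     (\<exists>(n::int) (r::nat) (phi::nat \<Rightarrow> int). r \<ge> 1 \<and> strict_mono_on {1..r} phi \<and> phi r \<le> n \<and>
        (\<forall>j\<in>{1..r}. y (phi j) = n + int j \<and> y (n + int j) = phi j) \<and>
        (\<forall>i. i \<notin> phi ` {1..r} \<and> i \<notin> {n + 1..n + int r} \<longrightarrow> y i = i))"

definition FPF_grassmannian :: "(int \<Rightarrow> int) \<Rightarrow> bool" where
  "FPF_grassmannian z \<longleftrightarrow> z \<in> FZ \<and> I_grassmannian (Iinv z)"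

definition phiE :: "int set \<Rightarrow> int \<Rightarrow> int" where
  "phiE E i = sorted_list_of_set E ! nat (i - 1)"

definition psiE :: "int set \<Rightarrow> int \<Rightarrow> int" where
  "psiE E = the_inv_into {1..int (card E)} (phiE E)"

definition restrict_std :: "(int \<Rightarrow> int) \<Rightarrow> int set \<Rightarrow> int \<Rightarrow> int" where
  "restrict_std z E i = (if 1 \<le> i \<and> i \<le> int (card E) then psiE E (z (phiE E i)) else Theta i)"

end

theory Submission
  imports Defs
begin


lemma Theta_inv[simp]: "Theta (Theta i) = i"
  unfolding Theta_def by auto

lemma Theta_neq: "Theta i \<noteq> i"
  unfolding Theta_def by auto

lemma phiE_in:
  assumes "finite E" "1 \<le> i" "i \<le> int (card E)"
  shows "phiE E i \<in> E"
proof -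
  have "nat (i-1) < length (sorted_list_of_set E)"
    using assms by (simp add: length_sorted_list_of_set)
  then show ?thesis unfolding phiE_def
    using nth_mem set_sorted_list_of_set[OF assms(1)] by metis
qed

lemma phiE_less_iff:
  assumes "finite E" "1 \<le> i" "i \<le> int (card E)" "1 \<le> j" "j \<le> int (card E)"
  shows "phiE E i < phiE E j \<longleftrightarrow> i < j"
proof -
  let ?xs = "sorted_list_of_set E"
  have s: "sorted_wrt (<) ?xs" using strict_sorted_list_of_set by blast
  have l: "length ?xs = card E" by (simp add: length_sorted_list_of_set)
  have A: "a < b \<Longrightarrow> b < card E \<Longrightarrow> ?xs ! a < ?xs ! b" for a b
    using sorted_wrt_nth_less[OF s] l by auto
  show ?thesis
  proof
    assume h: "phiE E i < phiE E j"
    show "i < j"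
    proof (rule ccontr)
      assume "\<not> i < j"
      then have "j < i \<or> j = i" by auto
      then show False
      proof
        assume "j < i"
        then have "phiE E j < phiE E i" unfolding phiE_def
          using A[of "nat (j-1)" "nat (i-1)"] assms by auto
        then show False using h by auto
      qed (use h in auto)
    qed
  next
    assume "i < j"
    then show "phiE E i < phiE E j" unfolding phiE_def
      using A[of "nat (i-1)" "nat (j-1)"] assms by auto
  qed
qed

lemma phiE_bij:
  assumes "finite E"
  shows "bij_betw (phiE E) {1..int (card E)} E"
proof (rule bij_betw_imageI)
  show "inj_on (phiE E) {1..int (card E)}"
    unfolding inj_on_def using phiE_less_iff[OF assms] by (metis atLeastAtMost_iff linorder_neqE_linordered_idom less_irrefl)
  show "phiE E ` {1..int (card E)} = E"
  proof
    show "phiE E ` {1..int (card E)} \<subseteq> E" using phiE_in[OF assms] by auto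
    show "E \<subseteq> phiE E ` {1..int (card E)}"
    proof
      fix x assume "x \<in> E"
      then have "x \<in> set (sorted_list_of_set E)" using assms by simp
      then obtain k where k: "k < length (sorted_list_of_set E)" "sorted_list_of_set E ! k = x"
        by (metis in_set_conv_nth)
      have "phiE E (int k + 1) = x" unfolding phiE_def using k by simp
      moreover have "int k + 1 \<in> {1..int (card E)}" using k by (simp add: length_sorted_list_of_set)
      ultimately show "x \<in> phiE E ` {1..int (card E)}" by force
    qed
  qed
qed

lemma psiE_props:
  assumes "finite E" "x \<in> E"
  shows "psiE E x \<in> {1..int (card E)}" "phiE E (psiE E x) = x"
proof -
  have b: "inj_on (phiE E) {1..int (card E)}" "phiE E ` {1..int (card E)} = E"
    using phiE_bij[OF assms(1)] unfolding bij_betw_def by auto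
  show "psiE E x \<in> {1..int (card E)}" unfolding psiE_def
    by (rule the_inv_into_into[OF b(1)]) (use b assms in auto)
  show "phiE E (psiE E x) = x" unfolding psiE_def
    by (rule f_the_inv_into_f[OF b(1)]) (use b assms in auto)
qed

lemma psiE_phiE:
  assumes "finite E" "1 \<le> i" "i \<le> int (card E)"
  shows "psiE E (phiE E i) = i"
  using phiE_bij[OF assms(1)] assms unfolding psiE_def bij_betw_def
  by (auto intro: the_inv_into_f_f)



lemma FZ_props:
  assumes "z \<in> FZ"
  shows "z (z i) = i" "z i \<noteq> i"
proof -
  obtain w where w: "z = inv w \<circ> Theta \<circ> w" "bij w" using assms unfolding FZ_def SZ_def by auto
  have a: "w (inv w x) = x" for x using w(2) by (simp add: bij_is_surj surj_f_inv_f)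
  have b: "inv w (w x) = x" for x using w(2) by (simp add: bij_is_inj)
  show "z (z i) = i" using a b w(1) by simp
  show "z i \<noteq> i"
  proof
    assume "z i = i"
    then have "w (inv w (Theta (w i))) = w i" using w(1) by simp
    then show False using a Theta_neq by metis
  qed
qed

lemma FZ_intro_aux:
  "\<forall>y. finite {i. y i \<noteq> Theta i} \<and> card {i. y i \<noteq> Theta i} = k \<and> (\<forall>i. y (y i) = i) \<and> (\<forall>i. y i \<noteq> i)
     \<longrightarrow> y \<in> FZ"
proof (induction k rule: less_induct)
  case (less k)
  show ?case
  proof (intro allI impI)
    fix y :: "int \<Rightarrow> int"
    assume H: "finite {i. y i \<noteq> Theta i} \<and> card {i. y i \<noteq> Theta i} = k \<and> (\<forall>i. y (y i) = i) \<and> (\<forall>i. y i \<noteq> i)"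
    let ?D = "{i. y i \<noteq> Theta i}"
    have fin: "finite ?D" and inv: "\<And>i. y (y i) = i" and fpf: "\<And>i. y i \<noteq> i" using H by auto
    show "y \<in> FZ"
    proof (cases "?D = {}")
      case True
      then have "y = Theta" by auto
      moreover have "id \<in> SZ" unfolding SZ_def by simp
      ultimately show ?thesis unfolding FZ_def by (auto intro!: exI[of _ id])
    next
      case False
      then obtain i where i: "y i \<noteq> Theta i" by auto
      define j where "j = y i"
      define t where "t = Theta i"
      have jt: "j \<noteq> t" using i j_def t_def by auto
      define tau where "tau = (\<lambda>k. if k = j then t else if k = t then j else k)"
      have tt: "tau (tau k) = k" for k unfolding tau_def by auto
      define y' where "y' = tau \<circ> y \<circ> tau"
      have inv': "y' (y' k) = k" for k unfolding y'_def using tt inv by simp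
      have fpf': "y' k \<noteq> k" for k
      proof
        assume "y' k = k"
        then have "tau (y' k) = tau k" by simp
        then have "y (tau k) = tau k" unfolding y'_def using tt by simp
        then show False using fpf by blast
      qed
      have sub: "{k. y' k \<noteq> Theta k} \<subseteq> ?D - {i}"
      proof
        fix k assume k: "k \<in> {k. y' k \<noteq> Theta k}"
        have ij: "i \<noteq> j" using fpf j_def by metis
        have it: "i \<noteq> t" using Theta_neq t_def by metis
        show "k \<in> ?D - {i}"
        proof (cases "k = i \<or> k = t \<or> k = j")
          case True
          then show ?thesis
          proof (elim disjE)
            assume "k = i" then show ?thesis using k ij it unfolding y'_def tau_def j_def t_def by auto
          next
            assume kt: "k = t"
            have "y' t = i" unfolding y'_def tau_def using inv j_def ij it jt by auto
            moreover have "Theta t = i" using t_def by simp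
            ultimately show ?thesis using k kt by auto
          next
            assume kj: "k = j"
            have yj: "y j = i" using inv j_def by simp
            have "Theta j \<noteq> i"
            proof
              assume "Theta j = i" then have "Theta i = j" by (metis Theta_inv)
              with i j_def show False by simp
            qed
            then show ?thesis using kj yj ij by auto
          qed
        next
          case False
          then have tk: "tau k = k" unfolding tau_def by auto
          show ?thesis
          proof (cases "y k = j \<or> y k = t")
            case True
            then show ?thesis
            proof
              assume "y k = j" then have "k = i" using inv j_def by metis
              then show ?thesis using False by auto
            next
              assume yk: "y k = t"
              have "Theta k \<noteq> t"
              proof
                assume "Theta k = t" then have "k = i" using t_def by (metis Theta_inv)
                then show False using False by auto
              qed
              then show ?thesis using yk False by auto
            qed
          next
            case False2: False
            then have "y' k = y k" unfolding y'_def using tk tau_def by auto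
            then show ?thesis using k False by auto
          qed
        qed
      qed
      have fin': "finite {k. y' k \<noteq> Theta k}" using sub fin by (meson finite_Diff finite_subset)
      have "card {k. y' k \<noteq> Theta k} \<le> card (?D - {i})" using sub fin by (simp add: card_mono)
      also have "\<dots> < card ?D" using card_Diff1_less[OF fin, of i] i by simp
      also have "\<dots> = k" using H by simp
      finally have "y' \<in> FZ" using less fin' inv' fpf' by blast
      then obtain w' where w': "y' = inv w' \<circ> Theta \<circ> w'" "w' \<in> SZ" unfolding FZ_def by auto
      have btau: "bij tau" by (rule o_bij[of tau]) (auto simp: tt fun_eq_iff)
      have itau: "inv tau = tau" by (rule inv_equality) (simp_all add: tt)
      define w where "w = w' \<circ> tau"
      have bw: "bij w" using w'(2) btau unfolding w_def SZ_def by (auto intro: bij_comp)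
      have "{k. w k \<noteq> k} \<subseteq> {k. w' k \<noteq> k} \<union> {j, t}" unfolding w_def tau_def by auto
      then have "finite {k. w k \<noteq> k}" using w'(2) unfolding SZ_def by (auto intro: finite_subset)
      then have wS: "w \<in> SZ" using bw unfolding SZ_def by auto
      have "inv w = tau \<circ> inv w'" unfolding w_def using btau w'(2) itau unfolding SZ_def
        by (simp add: o_inv_distrib)
      then have "inv w \<circ> Theta \<circ> w = tau \<circ> y' \<circ> tau" using w'(1) unfolding w_def by (simp add: comp_assoc)
      also have "\<dots> = y" unfolding y'_def using tt by auto
      finally show ?thesis using wS unfolding FZ_def by auto
    qed
  qed
qed

lemma FZ_intro:
  assumes "finite {i. y i \<noteq> Theta i}" "\<And>i. y (y i) = i" "\<And>i. y i \<noteq> i"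
  shows "y \<in> FZ"
  using FZ_intro_aux assms by blast

lemma even_card_aux:
  assumes zz: "\<And>i. z (z i) = i" and zf: "\<And>i. z i \<noteq> i"
  shows "card E = k \<Longrightarrow> finite E \<Longrightarrow> (\<forall>x\<in>E. z x \<in> E) \<Longrightarrow> even (card E)"
proof (induction k arbitrary: E rule: less_induct)
  case (less k E)
  show "even (card E)"
  proof (cases "E = {}")
    case True then show ?thesis by simp
  next
    case False
    then obtain x where x: "x \<in> E" by auto
    define E' where "E' = E - {x, z x}"
    have zx: "z x \<in> E" "z x \<noteq> x" using less.prems x zf by auto
    have sE: "{x, z x} \<subseteq> E" using x zx by auto
    have c2: "card {x, z x} = 2" using zx by simp
    have "card E' = card E - card {x, z x}" unfolding E'_def
      using card_Diff_subset[OF _ sE] by simp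
    moreover have "card {x, z x} \<le> card E" using card_mono[OF _ sE] less.prems by simp
    ultimately have c: "card E = card E' + 2" using c2 by simp
    have cl: "\<forall>y\<in>E'. z y \<in> E'"
    proof
      fix y assume y: "y \<in> E'"
      then have yy: "y \<in> E" "y \<noteq> x" "y \<noteq> z x" unfolding E'_def by auto
      have "z y \<in> E" using yy(1) less.prems by blast
      moreover have "z y \<noteq> z x" using yy(2) zz by metis
      moreover have "z y \<noteq> x" using yy(3) zz by metis
      ultimately show "z y \<in> E'" unfolding E'_def by auto
    qed
    have fE': "finite E'" using less.prems unfolding E'_def by simp
    have "card E' < k" using c less.prems by simp
    then have "even (card E')" using less.IH[OF _ refl fE' cl] by simp
    then show ?thesis using c by simp
  qed
qed

lemma Iinv_invol:
  assumes "\<And>i. y (y i) = i"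
  shows "Iinv y (Iinv y i) = i"
  unfolding Iinv_def using assms by auto

lemma Iinv_cases: "Iinv y i = y i \<or> Iinv y i = i" unfolding Iinv_def by auto

lemma Iinv_right:
  assumes "\<And>i. y (y i) = i"
  shows "Iinv y q < q \<longleftrightarrow> Icyc y (y q) q"
  unfolding Iinv_def Icyc_def using assms by auto

lemma Iinv_left:
  assumes "\<And>i. y (y i) = i"
  shows "p < Iinv y p \<longleftrightarrow> Icyc y p (y p)"
  unfolding Iinv_def Icyc_def using assms by auto



lemma IG_intro:
  fixes Y :: "int \<Rightarrow> int"
  assumes inv: "\<And>i. Y (Y i) = i"
  and fin: "finite {q. Y q < q}"
  and conv: "\<And>q q' x. Y q < q \<Longrightarrow> Y q' < q' \<Longrightarrow> q < x \<Longrightarrow> x < q' \<Longrightarrow> Y x < x"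
  and lr: "\<And>p q. p < Y p \<Longrightarrow> Y q < q \<Longrightarrow> p < q"
  and ord: "\<And>q q'. Y q < q \<Longrightarrow> Y q' < q' \<Longrightarrow> q < q' \<Longrightarrow> Y q < Y q'"
  shows "I_grassmannian Y"
proof (cases "{q. Y q < q} = {}")
  case True
  have "Y = id"
  proof
    fix i show "Y i = id i"
    proof (rule ccontr)
      assume "Y i \<noteq> id i"
      then have "Y i < i \<or> i < Y i" by auto
      then show False
      proof
        assume "Y i < i" then show False using True by auto
      next
        assume "i < Y i" then have "Y (Y i) < Y i" using inv by simp
        then show False using True by auto
      qed
    qed
  qed
  then show ?thesis unfolding I_grassmannian_def by simp
next
  case False
  define R where "R = {q. Y q < q}"
  define a where "a = Min R"
  define b where "b = Max R"
  have Rne: "R \<noteq> {}" and finR: "finite R" using False fin unfolding R_def by auto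
  have aR: "a \<in> R" unfolding a_def using Min_in[OF finR Rne] .
  have bR: "b \<in> R" unfolding b_def using Max_in[OF finR Rne] .
  have ab: "a \<le> b" using aR fin unfolding b_def R_def by auto
  have R_eq: "R = {a..b}"
  proof
    show "R \<subseteq> {a..b}" using fin unfolding a_def b_def R_def by auto
    show "{a..b} \<subseteq> R"
    proof
      fix x assume x: "x \<in> {a..b}"
      show "x \<in> R"
      proof (cases "x = a \<or> x = b")
        case True then show ?thesis using aR bR by auto
      next
        case False
        then have "a < x" "x < b" using x by auto
        then show ?thesis using conv[of a b x] aR bR unfolding R_def by auto
      qed
    qed
  qed
  define n where "n = a - 1"
  define r where "r = nat (b - a + 1)"
  define phi where "phi = (\<lambda>j::nat. Y (n + int j))"
  have r1: "r \<ge> 1" using ab unfolding r_def by simp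
  have inR: "j \<in> {1..r} \<Longrightarrow> n + int j \<in> R" for j using R_eq ab unfolding n_def r_def by auto
  have sm: "strict_mono_on {1..r} phi"
    unfolding strict_mono_on_def phi_def
  proof (intro allI impI)
    fix j j' assume "j \<in> {1..r} \<and> j' \<in> {1..r} \<and> j < j'"
    then have j: "j \<in> {1..r}" "j' \<in> {1..r}" "j < j'" by auto
    show "Y (n + int j) < Y (n + int j')"
      using ord inR[OF j(1)] inR[OF j(2)] j(3) unfolding R_def by auto
  qed
  have nr: "n + int r = b" unfolding n_def r_def using ab by simp
  have "phi r < a"
  proof -
    have "Y b < b" using bR unfolding R_def by simp
    then have "Y b < Y (Y b)" using inv by simp
    then show ?thesis using lr[of "Y b" a] aR nr unfolding phi_def R_def by auto
  qed
  then have phr: "phi r \<le> n" unfolding n_def by simp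
  have cyc: "\<forall>j\<in>{1..r}. Y (phi j) = n + int j \<and> Y (n + int j) = phi j"
    unfolding phi_def using inv by simp
  have rest: "\<forall>i. i \<notin> phi ` {1..r} \<and> i \<notin> {n + 1..n + int r} \<longrightarrow> Y i = i"
  proof (intro allI impI)
    fix i assume i: "i \<notin> phi ` {1..r} \<and> i \<notin> {n + 1..n + int r}"
    show "Y i = i"
    proof (rule ccontr)
      assume "Y i \<noteq> i"
      then have "Y i < i \<or> i < Y i" by auto
      then show False
      proof
        assume "Y i < i"
        then have "i \<in> {a..b}" using R_eq unfolding R_def by auto
        then show False using i nr unfolding n_def by auto
      next
        assume "i < Y i"
        then have "Y (Y i) < Y i" using inv by simp
        then have "Y i \<in> {a..b}" using R_eq unfolding R_def by auto
        then have j: "nat (Y i - n) \<in> {1..r}" "n + int (nat (Y i - n)) = Y i"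
          using nr unfolding n_def by auto
        then have "phi (nat (Y i - n)) = i" unfolding phi_def using inv by simp
        then have "i \<in> phi ` {1..r}" using j(1) by (metis imageI)
        then show False using i by blast
      qed
    qed
  qed
  show ?thesis unfolding I_grassmannian_def
    using r1 sm phr cyc rest by blast
qed

lemma IG_props:
  fixes Y :: "int \<Rightarrow> int"
  assumes "I_grassmannian Y"
  shows "(\<forall>i. Y (Y i) = i) \<and>
    (\<forall>q q' x. Y q < q \<longrightarrow> Y q' < q' \<longrightarrow> q < x \<longrightarrow> x < q' \<longrightarrow> Y x < x) \<and>
    (\<forall>p q. p < Y p \<longrightarrow> Y q < q \<longrightarrow> p < q) \<and>
    (\<forall>q q'. Y q < q \<longrightarrow> Y q' < q' \<longrightarrow> q < q' \<longrightarrow> Y q < Y q')"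
proof (cases "Y = id")
  case True then show ?thesis by simp
next
  case False
  then obtain n r phi where r1: "(r::nat) \<ge> 1" and sm: "strict_mono_on {1..r} phi"
    and phr: "phi r \<le> (n::int)"
    and cyc: "\<forall>j\<in>{1..r}. Y (phi j) = n + int j \<and> Y (n + int j) = phi j"
    and rest: "\<forall>i. i \<notin> phi ` {1..r} \<and> i \<notin> {n + 1..n + int r} \<longrightarrow> Y i = i"
    using assms unfolding I_grassmannian_def by blast
  have phn: "j \<in> {1..r} \<Longrightarrow> phi j \<le> n" for j
  proof -
    assume j: "j \<in> {1..r}"
    show "phi j \<le> n"
    proof (cases "j = r")
      case True then show ?thesis using phr by simp
    next
      case False
      then have "phi j < phi r" using sm j r1 unfolding strict_mono_on_def by auto
      then show ?thesis using phr by simp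
    qed
  qed
  have Rchar: "Y q < q \<longleftrightarrow> q \<in> {n+1..n+int r}" for q
  proof
    assume q: "Y q < q"
    show "q \<in> {n+1..n+int r}"
    proof (rule ccontr)
      assume nq: "q \<notin> {n+1..n+int r}"
      show False
      proof (cases "q \<in> phi ` {1..r}")
        case True
        then obtain j where j: "j \<in> {1..r}" "q = phi j" by auto
        then have "Y q = n + int j" using cyc by auto
        then show False using q phn[OF j(1)] j by auto
      next
        case False then show False using rest nq q by auto
      qed
    qed
  next
    assume "q \<in> {n+1..n+int r}"
    then have j: "nat (q - n) \<in> {1..r}" "n + int (nat (q - n)) = q" by auto
    then have "Y q = phi (nat (q - n))" using cyc by metis
    then show "Y q < q" using phn[OF j(1)] j by auto
  qed
  have Lchar: "p < Y p \<Longrightarrow> p \<le> n" for p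
  proof -
    assume p: "p < Y p"
    show "p \<le> n"
    proof (cases "p \<in> phi ` {1..r}")
      case True then show ?thesis using phn by auto
    next
      case False
      then have "p \<in> {n+1..n+int r}" using rest p by force
      then have "Y p < p" using Rchar by simp
      then show ?thesis using p by simp
    qed
  qed
  have inv: "Y (Y i) = i" for i
  proof (cases "i \<in> phi ` {1..r}")
    case True
    then obtain j where "j \<in> {1..r}" "i = phi j" by auto
    then show ?thesis using cyc by auto
  next
    case False
    show ?thesis
    proof (cases "i \<in> {n+1..n+int r}")
      case True
      then have j: "nat (i - n) \<in> {1..r}" "n + int (nat (i - n)) = i" by auto
      then show ?thesis using cyc by metis
    next
      case False2: False
      then show ?thesis using rest False by auto
    qed
  qed
  have ord: "Y q < q \<longrightarrow> Y q' < q' \<longrightarrow> q < q' \<longrightarrow> Y q < Y q'" for q q'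
  proof (intro impI)
    assume "Y q < q" "Y q' < q'" "q < q'"
    then have j: "nat (q - n) \<in> {1..r}" "n + int (nat (q - n)) = q"
      "nat (q' - n) \<in> {1..r}" "n + int (nat (q' - n)) = q'" "nat (q - n) < nat (q' - n)"
      using Rchar by auto
    then have "Y q = phi (nat (q - n))" "Y q' = phi (nat (q' - n))" using cyc by metis+
    then show "Y q < Y q'" using sm j unfolding strict_mono_on_def by auto
  qed
  show ?thesis
  proof (intro conjI allI impI)
    fix i show "Y (Y i) = i" by (rule inv)
  next
    fix q q' x assume "Y q < q" "Y q' < q'" "q < x" "x < q'"
    then show "Y x < x" using Rchar by auto
  next
    fix p q assume "p < Y p" "Y q < q"
    then show "p < q" using Lchar Rchar by force
  next
    fix q q' assume "Y q < q" "Y q' < q'" "q < q'"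
    then show "Y q < Y q'" using ord by blast
  qed
qed



theorem lemma3p33:
  fixes z :: "int \<Rightarrow> int" and E :: "int set"
  assumes "FPF_grassmannian z" and "finite E" and "z ` E = E"
  shows "FPF_grassmannian (restrict_std z E)"
proof -
  have zF: "z \<in> FZ" and YG: "I_grassmannian (Iinv z)" using assms(1) unfolding FPF_grassmannian_def by auto
  have zz: "\<And>i. z (z i) = i" and zf: "\<And>i. z i \<noteq> i" using FZ_props[OF zF] by auto
  have fE: "finite E" by (rule assms(2))
  have zE: "\<And>x. x \<in> E \<Longrightarrow> z x \<in> E" using assms(3) by auto
  define m where "m = int (card E)"
  define phi where "phi = phiE E"
  define psi where "psi = psiE E"
  define y where "y = restrict_std z E"
  define Y where "Y = Iinv z"
  have Yp: "(\<forall>i. Y (Y i) = i) \<and>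
    (\<forall>q q' x. Y q < q \<longrightarrow> Y q' < q' \<longrightarrow> q < x \<longrightarrow> x < q' \<longrightarrow> Y x < x) \<and>
    (\<forall>p q. p < Y p \<longrightarrow> Y q < q \<longrightarrow> p < q) \<and>
    (\<forall>q q'. Y q < q \<longrightarrow> Y q' < q' \<longrightarrow> q < q' \<longrightarrow> Y q < Y q')"
    using IG_props[OF YG] unfolding Y_def .
  have Yinv: "\<And>i. Y (Y i) = i" using Yp by blast
  have Yconv: "\<And>q q' x. Y q < q \<Longrightarrow> Y q' < q' \<Longrightarrow> q < x \<Longrightarrow> x < q' \<Longrightarrow> Y x < x" using Yp by blast
  have Ylr: "\<And>p q. p < Y p \<Longrightarrow> Y q < q \<Longrightarrow> p < q" using Yp by blast
  have Yord: "\<And>q q'. Y q < q \<Longrightarrow> Y q' < q' \<Longrightarrow> q < q' \<Longrightarrow> Y q < Y q'" using Yp by blast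
  have evm: "even m" unfolding m_def using even_card_aux[of z E "card E"] zz zf fE zE by auto
  have phin: "\<And>i. 1 \<le> i \<Longrightarrow> i \<le> m \<Longrightarrow> phi i \<in> E" unfolding phi_def m_def using phiE_in[OF fE] by auto
  have phil: "\<And>i j. 1 \<le> i \<Longrightarrow> i \<le> m \<Longrightarrow> 1 \<le> j \<Longrightarrow> j \<le> m \<Longrightarrow> phi i < phi j \<longleftrightarrow> i < j"
    unfolding phi_def m_def using phiE_less_iff[OF fE] by auto
  have psir: "\<And>x. x \<in> E \<Longrightarrow> 1 \<le> psi x \<and> psi x \<le> m \<and> phi (psi x) = x"
    unfolding phi_def m_def psi_def using psiE_props[OF fE] by auto
  have psiphi: "\<And>i. 1 \<le> i \<Longrightarrow> i \<le> m \<Longrightarrow> psi (phi i) = i"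
    unfolding phi_def m_def psi_def using psiE_phiE[OF fE] by auto
  have yin: "\<And>i. 1 \<le> i \<Longrightarrow> i \<le> m \<Longrightarrow> 1 \<le> y i \<and> y i \<le> m \<and> phi (y i) = z (phi i)"
  proof -
    fix i assume i: "1 \<le> i" "i \<le> m"
    have "y i = psi (z (phi i))" unfolding y_def restrict_std_def psi_def phi_def using i m_def by simp
    then show "1 \<le> y i \<and> y i \<le> m \<and> phi (y i) = z (phi i)" using psir zE phin i by auto
  qed
  have yout: "\<And>i. \<not> (1 \<le> i \<and> i \<le> m) \<Longrightarrow> y i = Theta i \<and> \<not> (1 \<le> Theta i \<and> Theta i \<le> m)"
  proof -
    fix i assume i: "\<not> (1 \<le> i \<and> i \<le> m)"
    have "y i = Theta i" unfolding y_def restrict_std_def using i unfolding m_def by auto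
    moreover have "\<not> (1 \<le> Theta i \<and> Theta i \<le> m)" using i evm unfolding Theta_def
      by (auto, presburger+)
    ultimately show "y i = Theta i \<and> \<not> (1 \<le> Theta i \<and> Theta i \<le> m)" by simp
  qed
  have yy: "\<And>i. y (y i) = i"
  proof -
    fix i show "y (y i) = i"
    proof (cases "1 \<le> i \<and> i \<le> m")
      case True
      then have a: "1 \<le> y i \<and> y i \<le> m \<and> phi (y i) = z (phi i)" using yin by auto
      then have "phi (y (y i)) = phi i" using yin zz by auto
      then have "psi (phi (y (y i))) = psi (phi i)" by simp
      then show ?thesis using psiphi a yin True by metis
    next
      case False
      then show ?thesis using yout by (metis Theta_inv)
    qed
  qed
  have yf: "\<And>i. y i \<noteq> i"
  proof -
    fix i show "y i \<noteq> i"
    proof (cases "1 \<le> i \<and> i \<le> m")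
      case True
      then show ?thesis using yin zf by metis
    next
      case False
      then show ?thesis using yout Theta_neq by metis
    qed
  qed
  have "{i. y i \<noteq> Theta i} \<subseteq> {1..m}" using yout by force
  then have yF: "y \<in> FZ" using FZ_intro[of y] yy yf by (meson finite_atLeastAtMost_int finite_subset)
  have Icyc_tr: "\<And>p q. Icyc y p q \<Longrightarrow> 1 \<le> p \<and> p \<le> m \<and> 1 \<le> q \<and> q \<le> m \<and> Icyc z (phi p) (phi q)"
  proof -
    fix p q assume c: "Icyc y p q"
    then obtain a b where c1: "y p = q" "y q = p" "p < q" and
      c2: "y a = b" "y b = a" "a < b" "p < b" "b < q" unfolding Icyc_def by auto
    have p: "1 \<le> p \<and> p \<le> m"
    proof (rule ccontr)
      assume "\<not> (1 \<le> p \<and> p \<le> m)"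
      then have "q = Theta p" using yout c1 by metis
      then show False using c1 c2 unfolding Theta_def by (auto split: if_splits)
    qed
    have q: "1 \<le> q \<and> q \<le> m" using yin p c1 by metis
    have b: "1 \<le> b \<and> b \<le> m" using p q c2 by auto
    have a: "1 \<le> a \<and> a \<le> m" using yin b c2 by metis
    have "z (phi p) = phi q" "z (phi q) = phi p" "z (phi a) = phi b" "z (phi b) = phi a"
      using yin p q a b c1 c2 by metis+
    moreover have "phi p < phi q" "phi a < phi b" "phi p < phi b" "phi b < phi q"
      using phil p q a b c1 c2 by auto
    ultimately have "Icyc z (phi p) (phi q)" unfolding Icyc_def by blast
    then show "1 \<le> p \<and> p \<le> m \<and> 1 \<le> q \<and> q \<le> m \<and> Icyc z (phi p) (phi q)" using p q by simp
  qed
  have Rz: "\<And>Q. Icyc z (z Q) Q \<Longrightarrow> Y Q < Q \<and> Y Q = z Q"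
    unfolding Y_def using Iinv_right[of z] zz Iinv_cases[of z] by (metis less_irrefl)
  have Lz: "\<And>P. Icyc z P (z P) \<Longrightarrow> P < Y P"
    unfolding Y_def using Iinv_left[of z] zz by metis
  have Rtr: "\<And>q. Iinv y q < q \<Longrightarrow> 1 \<le> q \<and> q \<le> m \<and> 1 \<le> y q \<and> y q \<le> m \<and>
      Y (phi q) < phi q \<and> Y (phi q) = phi (y q) \<and> Iinv y q = y q \<and> y q < q"
  proof -
    fix q assume h: "Iinv y q < q"
    then have c: "Icyc y (y q) q" using Iinv_right[of y] yy by metis
    then have t: "1 \<le> q \<and> q \<le> m \<and> 1 \<le> y q \<and> y q \<le> m \<and> Icyc z (phi (y q)) (phi q)" using Icyc_tr by metis
    then have "phi (y q) = z (phi q)" using yin by metis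
    then have "Y (phi q) < phi q \<and> Y (phi q) = phi (y q)" using Rz t by metis
    moreover have "Iinv y q = y q" using h Iinv_cases[of y q] by auto
    ultimately show "1 \<le> q \<and> q \<le> m \<and> 1 \<le> y q \<and> y q \<le> m \<and>
      Y (phi q) < phi q \<and> Y (phi q) = phi (y q) \<and> Iinv y q = y q \<and> y q < q" using t h by auto
  qed
  have Ltr: "\<And>p. p < Iinv y p \<Longrightarrow> 1 \<le> p \<and> p \<le> m \<and> phi p < Y (phi p)"
  proof -
    fix p assume h: "p < Iinv y p"
    then have c: "Icyc y p (y p)" using Iinv_left[of y] yy by metis
    then have t: "1 \<le> p \<and> p \<le> m \<and> Icyc z (phi p) (phi (y p))" using Icyc_tr by metis
    then have "phi (y p) = z (phi p)" using yin by metis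
    then show "1 \<le> p \<and> p \<le> m \<and> phi p < Y (phi p)" using t Lz by metis
  qed
  have IGy: "I_grassmannian (Iinv y)"
  proof (rule IG_intro)
    fix i show "Iinv y (Iinv y i) = i" using Iinv_invol yy by metis
  next
    have "{q. Iinv y q < q} \<subseteq> {1..m}" using Rtr by force
    then show "finite {q. Iinv y q < q}" by (meson finite_atLeastAtMost_int finite_subset)
  next
    fix q q' x assume h: "Iinv y q < q" "Iinv y q' < q'" "q < x" "x < q'"
    note tq = Rtr[OF h(1)] and tq' = Rtr[OF h(2)]
    have x: "1 \<le> x \<and> x \<le> m" using tq tq' h by auto
    have l1: "phi q < phi x" using phil[of q x] tq x h by blast
    have l2: "phi x < phi q'" using phil[of x q'] tq' x h by blast
    have YX: "Y (phi x) < phi x" using Yconv[of "phi q" "phi q'" "phi x"] l1 l2 tq tq' by blast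
    have YXz: "Y (phi x) = z (phi x)" using YX Iinv_cases[of z "phi x"] unfolding Y_def by auto
    have yx: "1 \<le> y x \<and> y x \<le> m \<and> phi (y x) = z (phi x)" using yin x by blast
    have "phi (y x) < phi x" using yx YX YXz by simp
    then have "y x < x" using phil[of "y x" x] yx x by blast
    moreover have "y x < q"
    proof -
      have "Y (phi x) < Y (Y (phi x))" using Yinv YX by simp
      then have "Y (phi x) < phi q" using Ylr tq by blast
      then have "phi (y x) < phi q" using yx YXz by simp
      then show ?thesis using phil[of "y x" q] yx tq by blast
    qed
    ultimately have "Icyc y (y x) x" unfolding Icyc_def using yy tq h
      by (intro conjI exI[of _ "y q"] exI[of _ q]) auto
    then show "Iinv y x < x" using Iinv_right[of y] yy by metis
  next
    fix p q assume h: "p < Iinv y p" "Iinv y q < q"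
    note tp = Ltr[OF h(1)] and tq = Rtr[OF h(2)]
    have "phi p < phi q" using Ylr tp tq by blast
    then show "p < q" using phil[of p q] tp tq by blast
  next
    fix q q' assume h: "Iinv y q < q" "Iinv y q' < q'" "q < q'"
    note tq = Rtr[OF h(1)] and tq' = Rtr[OF h(2)]
    have "phi q < phi q'" using phil[of q q'] tq tq' h by blast
    then have "Y (phi q) < Y (phi q')" using Yord tq tq' by blast
    then have "phi (y q) < phi (y q')" using tq tq' by simp
    then have "y q < y q'" using phil[of "y q" "y q'"] tq tq' by blast
    then show "Iinv y q < Iinv y q'" using tq tq' by simp
  qed
  show ?thesis unfolding FPF_grassmannian_def using yF IGy y_def by simp
qed

end
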